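(* Let $X$ be a graph with real symmetric Hamiltonian $M$ whose entries are algebraic integers, with spectral decomposition $M=\sum_\lambda\lambda E_\lambda$. Suppose perfect state transfer occurs from vertex $a$ to vertex $\alpha\neq a$ at time $\tau$, and that a vertex $v\notin\{a,\alpha\}$ is periodic at time $\tau$. Let $s\in\mathbb{Q}\setminus\{0\}$. Then perfect state transfer occurs from $\mathbf e_a+s\mathbf e_v$ to $\mathbf e_\alpha+s\mathbf e_v$ at time $\tau$ if and only if there exist $\lambda\in\Phi^+_{\mathbf e_a,\mathbf e_\alpha}$ and $\lambda'\in\Phi_{\mathbf e_v}$ such that $\lambda\tau\equiv\lambda'\tau\pmod{2\pi}$.
   Context: $U(t)=e^{-\mathrm{i}tM}$. Perfect state transfer from $\mathbf u$ to $\boldsymbol\mu$ at time $\tau$: $U(\tau)\mathbf u=\eta\boldsymbol\mu$ with $|\eta|=1$; vertex $v$ is periodic at $\tau$ if $U(\tau)\mathbf e_v=\eta\mathbf e_v$ with $|\eta|=1$. $\Phi_{\mathbf v}=\{\lambda:E_\lambda\mathbf v\neq\mathbf 0\}$ is the eigenvalue support, and $\Phi^+_{\mathbf e_a,\mathbf e_\alpha}=\{\lambda: E_\lambda\mathbf e_a=E_\lambda\mathbf e_\alpha\neq\mathbf 0\}$. *)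

theory Defs
  imports "HOL-Analysis.Analysis" "HOL-Computational_Algebra.Polynomial"
begin

definition cmat :: "real^'n^'m \<Rightarrow> complex^'n^'m" where
  "cmat A = (\<chi> i j. complex_of_real (A $ i $ j))"

definition cvec :: "real^'n \<Rightarrow> complex^'n" where
  "cvec x = (\<chi> i. complex_of_real (x $ i))"

definition mpow :: "'a::comm_ring_1^'n^'n \<Rightarrow> nat \<Rightarrow> 'a^'n^'n" where
  "mpow A k = (((**) A) ^^ k) (mat 1)"

definition transition :: "real^'n^'n \<Rightarrow> real \<Rightarrow> complex^'n^'n" where
  "transition M t = (\<chi> i j. (\<Sum>k. ((- \<i> * complex_of_real t) ^ k / of_nat (fact k))
                                   * (mpow (cmat M) k) $ i $ j))"

definition evec :: "'n::finite \<Rightarrow> 'a::zero_neq_one^'n" where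
  "evec v = axis v 1"

definition pst :: "real^'n^'n \<Rightarrow> complex^'n \<Rightarrow> complex^'n \<Rightarrow> real \<Rightarrow> bool" where
  "pst M u mu tau \<longleftrightarrow> (\<exists>eta. cmod eta = 1 \<and> transition M tau *v u = eta *s mu)"

definition periodic_vertex :: "real^'n^'n \<Rightarrow> 'n \<Rightarrow> real \<Rightarrow> bool" where
  "periodic_vertex M v tau \<longleftrightarrow>
     (\<exists>eta. cmod eta = 1 \<and> transition M tau *v evec v = eta *s evec v)"

definition spectral_decomp :: "real^'n^'n \<Rightarrow> real set \<Rightarrow> (real \<Rightarrow> real^'n^'n) \<Rightarrow> bool" where
  "spectral_decomp M Lam E \<longleftrightarrow>
     finite Lam \<and>
     (\<forall>l\<in>Lam. E l \<noteq> 0 \<and> transpose (E l) = E l \<and> E l ** E l = E l) \<and>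
     (\<forall>l\<in>Lam. \<forall>l'\<in>Lam. l \<noteq> l' \<longrightarrow> E l ** E l' = 0) \<and>
     (\<Sum>l\<in>Lam. E l) = mat 1 \<and>
     M = (\<Sum>l\<in>Lam. l *\<^sub>R E l)"

definition eig_support :: "real set \<Rightarrow> (real \<Rightarrow> real^'n^'n) \<Rightarrow> real^'n \<Rightarrow> real set" where
  "eig_support Lam E x = {l \<in> Lam. E l *v x \<noteq> 0}"

definition eig_support_plus :: "real set \<Rightarrow> (real \<Rightarrow> real^'n^'n) \<Rightarrow> 'n \<Rightarrow> 'n \<Rightarrow> real set" where
  "eig_support_plus Lam E a b =
     {l \<in> Lam. E l *v evec a = E l *v evec b \<and> E l *v evec a \<noteq> 0}"

end

theory Submission
  imports Defs
begin

lemma sd_facts: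
  assumes "spectral_decomp M Lam E"
  shows "finite Lam" "\<And>l. l\<in>Lam \<Longrightarrow> E l ** E l = E l"
    "\<And>l l'. l\<in>Lam \<Longrightarrow> l'\<in>Lam \<Longrightarrow> l \<noteq> l' \<Longrightarrow> E l ** E l' = 0"
    "(\<Sum>l\<in>Lam. E l) = mat 1" "M = (\<Sum>l\<in>Lam. l *\<^sub>R E l)"
  using assms unfolding spectral_decomp_def by auto

lemma EE_entry:
  assumes sd: "spectral_decomp M Lam E" and "l\<in>Lam" "l'\<in>Lam"
  shows "(\<Sum>m\<in>UNIV. E l' $ i $ m * E l $ m $ j) = (if l = l' then E l $ i $ j else 0)"
proof -
  have "(\<Sum>m\<in>UNIV. E l' $ i $ m * E l $ m $ j) = (E l' ** E l) $ i $ j"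
    by (simp add: matrix_matrix_mult_def)
  then show ?thesis using sd_facts[OF sd] assms by auto
qed

lemma spec_mult:
  assumes sd: "spectral_decomp M Lam E"
  shows "(\<Sum>l'\<in>Lam. f l' *\<^sub>R E l') ** (\<Sum>l\<in>Lam. g l *\<^sub>R E l) = (\<Sum>l\<in>Lam. (f l * g l) *\<^sub>R E l)"
proof -
  have fin: "finite Lam" using sd_facts[OF sd] by auto
  show ?thesis
  proof (rule vec_eq_iff[THEN iffD2], rule allI, rule vec_eq_iff[THEN iffD2], rule allI)
    fix i j
    have "((\<Sum>l'\<in>Lam. f l' *\<^sub>R E l') ** (\<Sum>l\<in>Lam. g l *\<^sub>R E l)) $ i $ j
       = (\<Sum>m\<in>UNIV. (\<Sum>l'\<in>Lam. f l' * E l' $ i $ m) * (\<Sum>l\<in>Lam. g l * E l $ m $ j))"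
      by (simp add: matrix_matrix_mult_def sum_component)
    also have "\<dots> = (\<Sum>m\<in>UNIV. \<Sum>l'\<in>Lam. \<Sum>l\<in>Lam. f l' * g l * (E l' $ i $ m * E l $ m $ j))"
      by (simp add: sum_product mult_ac)
    also have "\<dots> = (\<Sum>l'\<in>Lam. \<Sum>l\<in>Lam. f l' * g l * (\<Sum>m\<in>UNIV. E l' $ i $ m * E l $ m $ j))"
      by (simp add: sum_distrib_left sum.swap[of _ UNIV])
    also have "\<dots> = (\<Sum>l'\<in>Lam. \<Sum>l\<in>Lam. f l' * g l * (if l = l' then E l $ i $ j else 0))"
      by (intro sum.cong refl, simp add: EE_entry[OF sd])
    also have "\<dots> = (\<Sum>l'\<in>Lam. f l' * g l' * E l' $ i $ j)"
      by (simp add: fin if_distrib sum.delta cong: if_cong)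
    also have "\<dots> = (\<Sum>l\<in>Lam. (f l * g l) *\<^sub>R E l) $ i $ j"
      by (simp add: sum_component)
    finally show "((\<Sum>l'\<in>Lam. f l' *\<^sub>R E l') ** (\<Sum>l\<in>Lam. g l *\<^sub>R E l)) $ i $ j = (\<Sum>l\<in>Lam. (f l * g l) *\<^sub>R E l) $ i $ j" .
  qed
qed

lemma mpow_Suc: "mpow A (Suc k) = A ** mpow A k"
  by (simp add: mpow_def)
lemma mpow_0: "mpow A 0 = mat 1"
  by (simp add: mpow_def)

lemma mpow_real:
  assumes sd: "spectral_decomp M Lam E"
  shows "mpow M k = (\<Sum>l\<in>Lam. (l ^ k) *\<^sub>R E l)"
proof (induction k)
  case 0 then show ?case using sd_facts[OF sd] by (simp add: mpow_0)
next
  case (Suc k)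
  have "mpow M (Suc k) = (\<Sum>l\<in>Lam. l *\<^sub>R E l) ** (\<Sum>l\<in>Lam. (l ^ k) *\<^sub>R E l)"
    using Suc sd_facts(5)[OF sd] by (simp add: mpow_Suc)
  also have "\<dots> = (\<Sum>l\<in>Lam. (l ^ Suc k) *\<^sub>R E l)"
    by (simp add: spec_mult[OF sd])
  finally show ?case .
qed

lemma cmat_mult: "cmat (A ** B) = cmat A ** cmat B"
  by (simp add: vec_eq_iff cmat_def matrix_matrix_mult_def)

lemma cmat_one: "cmat (mat 1) = mat 1"
  by (simp add: vec_eq_iff cmat_def mat_def)

lemma mpow_cmat: "mpow (cmat A) k = cmat (mpow A k)"
  by (induction k) (simp_all add: mpow_0 mpow_Suc cmat_one cmat_mult)

lemma transition_formula:
  assumes sd: "spectral_decomp M Lam E"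
  shows "transition M t = (\<chi> i j. \<Sum>l\<in>Lam. exp (- \<i> * complex_of_real (t * l)) * complex_of_real (E l $ i $ j))"
proof -
  have fin: "finite Lam" using sd_facts[OF sd] by auto
  { fix i j
    let ?c = "- \<i> * complex_of_real t"
    have ent: "(mpow (cmat M) k) $ i $ j = (\<Sum>l\<in>Lam. complex_of_real (l ^ k * E l $ i $ j))" for k
      unfolding mpow_cmat mpow_real[OF sd] by (simp add: cmat_def sum_component)
    have "(\<lambda>k. \<Sum>l\<in>Lam. ((?c * complex_of_real l) ^ k /\<^sub>R fact k) * complex_of_real (E l $ i $ j))
          sums (\<Sum>l\<in>Lam. exp (?c * complex_of_real l) * complex_of_real (E l $ i $ j))"
      by (intro sums_sum sums_mult2 exp_converges)
    moreover have "(\<lambda>k. \<Sum>l\<in>Lam. ((?c * complex_of_real l) ^ k /\<^sub>R fact k) * complex_of_real (E l $ i $ j))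
        = (\<lambda>k. ?c ^ k / of_nat (fact k) * (mpow (cmat M) k) $ i $ j)"
      apply (rule ext)
      apply (simp add: ent sum_distrib_left scaleR_conv_of_real)
      apply (intro sum.cong refl)
      apply (simp add: divide_simps)
      apply (rule disjI2)
      apply (subst power_mult_distrib[symmetric])
      apply (simp add: mult_ac)
      done
    ultimately have "(\<Sum>k. ?c ^ k / of_nat (fact k) * (mpow (cmat M) k) $ i $ j) =
       (\<Sum>l\<in>Lam. exp (- \<i> * complex_of_real (t * l)) * complex_of_real (E l $ i $ j))"
      by (simp add: sums_iff mult.assoc)
  }
  then show ?thesis unfolding transition_def by (simp add: vec_eq_iff)
qed


lemma proj_entry:
  assumes sd: "spectral_decomp M Lam E" and m: "m \<in> Lam"
  shows "(cmat (E m) *v (transition M t *v u)) $ i = exp (- \<i> * complex_of_real (t * m)) * (cmat (E m) *v u) $ i"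
proof -
  have fin: "finite Lam" using sd_facts[OF sd] by auto
  let ?z = "\<lambda>l. exp (- \<i> * complex_of_real (t * l))"
  have ent: "(cmat (E m) ** transition M t) $ i $ k = ?z m * complex_of_real (E m $ i $ k)" for i k
  proof -
    have "(cmat (E m) ** transition M t) $ i $ k
       = (\<Sum>j\<in>UNIV. complex_of_real (E m $ i $ j) * (\<Sum>l\<in>Lam. ?z l * complex_of_real (E l $ j $ k)))"
      by (simp add: matrix_matrix_mult_def cmat_def transition_formula[OF sd])
    also have "\<dots> = (\<Sum>l\<in>Lam. ?z l * complex_of_real (\<Sum>j\<in>UNIV. E m $ i $ j * E l $ j $ k))"
      by (simp add: sum_distrib_left sum.swap[of _ UNIV] mult_ac)
    also have "\<dots> = (\<Sum>l\<in>Lam. ?z l * complex_of_real (if l = m then E l $ i $ k else 0))"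
      by (intro sum.cong refl, simp add: EE_entry[OF sd _ m])
    also have "\<dots> = ?z m * complex_of_real (E m $ i $ k)"
      using m fin by (simp add: if_distrib sum.delta cong: if_cong)
    finally show ?thesis .
  qed
  have "(cmat (E m) *v (transition M t *v u)) $ i = ((cmat (E m) ** transition M t) *v u) $ i"
    by (simp add: matrix_vector_mul_assoc)
  also have "\<dots> = ?z m * (cmat (E m) *v u) $ i"
    unfolding matrix_vector_mult_def ent by (simp add: sum_distrib_left mult_ac cmat_def)
  finally show ?thesis .
qed

lemma cmat_evec: "(cmat A *v evec a) $ i = complex_of_real (A $ i $ a)"
  by (simp add: matrix_vector_mult_def cmat_def evec_def axis_def if_distrib cong: if_cong)

lemma rmat_evec: "((A::real^'n^'n) *v evec a) $ i = A $ i $ a"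
  by (simp add: matrix_vector_mult_def evec_def axis_def if_distrib cong: if_cong)

lemma evec_comp: "(evec a :: 'a::zero_neq_one^'n) $ i = (if i = a then 1 else 0)"
  by (simp add: evec_def axis_def)

lemma key_eq:
  assumes sd: "spectral_decomp M Lam E" and m: "m \<in> Lam"
    and U: "transition M t *v evec a = eta *s evec b"
  shows "exp (- \<i> * complex_of_real (t * m)) * complex_of_real (E m $ i $ a) = eta * complex_of_real (E m $ i $ b)"
proof -
  have "(cmat (E m) *v (transition M t *v evec a)) $ i = (cmat (E m) *v (eta *s evec b)) $ i"
    using U by simp
  then show ?thesis
    by (simp add: proj_entry[OF sd m] vector_scalar_commute cmat_evec)
qed

lemma norm_z: "cmod (exp (- \<i> * complex_of_real x)) = 1"
  by (simp add: norm_exp_eq_Re)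

lemma z_eq: "exp (- \<i> * complex_of_real (t * l)) = exp (- \<i> * complex_of_real (t * l'))
   \<longleftrightarrow> (\<exists>k::int. l * t - l' * t = 2 * pi * of_int k)"
proof
  assume "exp (- \<i> * complex_of_real (t * l)) = exp (- \<i> * complex_of_real (t * l'))"
  then obtain n :: int where n: "- \<i> * complex_of_real (t * l) = - \<i> * complex_of_real (t * l') + (2 * of_int n * pi) * \<i>"
    by (auto simp: exp_eq)
  then have "Im (- \<i> * complex_of_real (t * l)) = Im (- \<i> * complex_of_real (t * l') + (2 * of_int n * pi) * \<i>)"
    by simp
  then have "l * t - l' * t = 2 * pi * of_int (- n)" by (simp add: algebra_simps)
  then show "\<exists>k::int. l * t - l' * t = 2 * pi * of_int k" by blast
next
  assume "\<exists>k::int. l * t - l' * t = 2 * pi * of_int k"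
  then obtain k :: int where k: "l * t - l' * t = 2 * pi * of_int k" by blast
  have "- \<i> * complex_of_real (t * l) = - \<i> * complex_of_real (t * l') + complex_of_real (real_of_int (2 * (-k)) * pi) * \<i>"
  proof -
    have "t * l = t * l' + 2 * pi * of_int k" using k by (simp add: algebra_simps)
    then have "complex_of_real (t * l) = complex_of_real (t * l') + 2 * pi * of_int k" by simp
    then show ?thesis by (simp add: algebra_simps)
  qed
  then show "exp (- \<i> * complex_of_real (t * l)) = exp (- \<i> * complex_of_real (t * l'))"
    unfolding exp_eq by blast
qed


theorem mainTheorem7:
  fixes M :: "real^'n^'n" and Lam :: "real set" and E :: "real \<Rightarrow> real^'n^'n"
    and a alpha v :: 'n and tau s :: real
  assumes sym: "transpose M = M"
    and algint: "\<forall>i j. algebraic_int (M $ i $ j)"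
    and sd: "spectral_decomp M Lam E"
    and aa: "alpha \<noteq> a"
    and pst_a: "pst M (evec a) (evec alpha) tau"
    and va: "v \<noteq> a" and valpha: "v \<noteq> alpha"
    and per: "periodic_vertex M v tau"
    and s_rat: "s \<in> \<rat>" and s_nz: "s \<noteq> 0"
  shows "pst M (evec a + complex_of_real s *s evec v) (evec alpha + complex_of_real s *s evec v) tau
         \<longleftrightarrow> (\<exists>l \<in> eig_support_plus Lam E a alpha. \<exists>l' \<in> eig_support Lam E (evec v).
                \<exists>k::int. l * tau - l' * tau = 2 * pi * of_int k)"
proof -
  define z where "z l = exp (- \<i> * complex_of_real (tau * l))" for l
  have nz: "cmod (z l) = 1" for l unfolding z_def by (rule norm_z)
  have znz: "z l \<noteq> 0" for l using nz[of l] by auto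
  obtain eta where eta1: "cmod eta = 1" and Ua: "transition M tau *v evec a = eta *s evec alpha"
    using pst_a unfolding pst_def by blast
  obtain gam where gam1: "cmod gam = 1" and Uv: "transition M tau *v evec v = gam *s evec v"
    using per unfolding periodic_vertex_def by blast
  have F1: "m \<in> Lam \<Longrightarrow> z m * complex_of_real (E m $ i $ a) = eta * complex_of_real (E m $ i $ alpha)" for m i
    unfolding z_def by (rule key_eq[OF sd _ Ua])
  have F2: "m \<in> Lam \<Longrightarrow> z m * complex_of_real (E m $ i $ v) = gam * complex_of_real (E m $ i $ v)" for m i
    unfolding z_def by (rule key_eq[OF sd _ Uv])
  have fin: "finite Lam" and sumE: "(\<Sum>l\<in>Lam. E l) = mat 1" using sd_facts[OF sd] by auto
  have sumE_entry: "(\<Sum>l\<in>Lam. E l $ i $ j) = (if i = j then 1 else 0)" for i j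
  proof -
    have "(\<Sum>l\<in>Lam. E l) $ i $ j = (if i = j then 1 else 0)" using sumE by (simp add: mat_def)
    then show ?thesis by (simp add: sum_component)
  qed
  have C1: "pst M (evec a + complex_of_real s *s evec v) (evec alpha + complex_of_real s *s evec v) tau
            \<longleftrightarrow> eta = gam"
  proof
    assume "pst M (evec a + complex_of_real s *s evec v) (evec alpha + complex_of_real s *s evec v) tau"
    then obtain e where e: "transition M tau *v (evec a + complex_of_real s *s evec v) = e *s (evec alpha + complex_of_real s *s evec v)"
      unfolding pst_def by blast
    then have e2: "eta *s evec alpha + complex_of_real s *s (gam *s evec v) = e *s (evec alpha + complex_of_real s *s evec v)"
      by (simp add: matrix_vector_right_distrib vector_scalar_commute Ua Uv)
    from arg_cong[where f="\<lambda>x. x $ alpha", OF e2] valpha have "eta = e" by (simp add: evec_comp)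
    moreover from arg_cong[where f="\<lambda>x. x $ v", OF e2] valpha have "complex_of_real s * gam = e * complex_of_real s"
      by (simp add: evec_comp)
    then have "gam = e" using s_nz by simp
    ultimately show "eta = gam" by simp
  next
    assume "eta = gam"
    then have "transition M tau *v (evec a + complex_of_real s *s evec v) = eta *s (evec alpha + complex_of_real s *s evec v)"
      by (simp add: matrix_vector_right_distrib vector_scalar_commute Ua Uv vector_add_ldistrib mult_ac)
    then show "pst M (evec a + complex_of_real s *s evec v) (evec alpha + complex_of_real s *s evec v) tau"
      unfolding pst_def using eta1 by blast
  qed
  have C2: "z l = eta" if l: "l \<in> eig_support_plus Lam E a alpha" for l
  proof -
    from l have lL: "l \<in> Lam" and eqv: "E l *v evec a = E l *v evec alpha" and ne: "E l *v evec a \<noteq> 0"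
      unfolding eig_support_plus_def by auto
    from ne obtain i where i: "E l $ i $ a \<noteq> 0" by (auto simp: vec_eq_iff rmat_evec)
    from eqv have "E l $ i $ a = E l $ i $ alpha" by (auto simp: vec_eq_iff rmat_evec)
    with F1[OF lL, of i] i show ?thesis by simp
  qed
  have C3: "z l = gam" if l: "l \<in> eig_support Lam E (evec v)" for l
  proof -
    from l have lL: "l \<in> Lam" and ne: "E l *v evec v \<noteq> 0"
      unfolding eig_support_def by auto
    from ne obtain i where i: "E l $ i $ v \<noteq> 0" by (auto simp: vec_eq_iff rmat_evec)
    with F2[OF lL, of i] show ?thesis by simp
  qed
  have C4: "\<exists>l'. l' \<in> eig_support Lam E (evec v)"
  proof (rule ccontr)
    assume "\<not> ?thesis"
    then have "\<forall>l\<in>Lam. E l $ v $ v = 0"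
      unfolding eig_support_def by (auto simp: vec_eq_iff rmat_evec)
    then have "(\<Sum>l\<in>Lam. E l $ v $ v) = 0" by simp
    then show False using sumE_entry[of v v] by simp
  qed
  have C5: "\<exists>l. l \<in> eig_support_plus Lam E a alpha"
  proof (rule ccontr)
    assume none: "\<not> ?thesis"
    have neg: "E m $ alpha $ a = - E m $ alpha $ alpha" if mL: "m \<in> Lam" for m
    proof -
      define x where "x = E m $ alpha $ a"
      define y where "y = E m $ alpha $ alpha"
      have eq: "z m * complex_of_real x = eta * complex_of_real y" using F1[OF mL] x_def y_def by simp
      then have "cmod (z m * complex_of_real x) = cmod (eta * complex_of_real y)" by simp
      then have ab: "\<bar>x\<bar> = \<bar>y\<bar>" by (simp add: norm_mult nz eta1)
      show ?thesis
      proof (cases "x = y \<and> y \<noteq> 0")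
        case True
        then have "z m = eta" using eq by simp
        then have "\<forall>i. E m $ i $ a = E m $ i $ alpha" using F1[OF mL] znz[of m] by simp
        then have "E m *v evec a = E m *v evec alpha" by (simp add: vec_eq_iff rmat_evec)
        moreover have "E m *v evec a \<noteq> 0" using True x_def
          by (auto simp: vec_eq_iff rmat_evec)
        ultimately have "m \<in> eig_support_plus Lam E a alpha"
          using mL unfolding eig_support_plus_def by auto
        then show ?thesis using none by blast
      next
        case False
        then show ?thesis using ab x_def y_def by (auto simp: abs_if split: if_splits)
      qed
    qed
    have "(\<Sum>l\<in>Lam. E l $ alpha $ a) = (\<Sum>l\<in>Lam. - E l $ alpha $ alpha)"
      by (rule sum.cong) (auto simp: neg)
    then show False using sumE_entry[of alpha a] sumE_entry[of alpha alpha] aa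
      by (simp add: sum_negf)
  qed
  have C6: "z l = z l' \<longleftrightarrow> (\<exists>k::int. l * tau - l' * tau = 2 * pi * of_int k)" for l l'
    unfolding z_def by (rule z_eq)
  show ?thesis
    unfolding C1
  proof
    assume "eta = gam"
    obtain l where l: "l \<in> eig_support_plus Lam E a alpha" using C5 by blast
    obtain l' where l': "l' \<in> eig_support Lam E (evec v)" using C4 by blast
    have "z l = z l'" using C2[OF l] C3[OF l'] \<open>eta = gam\<close> by simp
    then show "\<exists>l \<in> eig_support_plus Lam E a alpha. \<exists>l' \<in> eig_support Lam E (evec v).
                \<exists>k::int. l * tau - l' * tau = 2 * pi * of_int k"
      using l l' C6 by blast
  next
    assume "\<exists>l \<in> eig_support_plus Lam E a alpha. \<exists>l' \<in> eig_support Lam E (evec v).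
                \<exists>k::int. l * tau - l' * tau = 2 * pi * of_int k"
    then obtain l l' where l: "l \<in> eig_support_plus Lam E a alpha" and l': "l' \<in> eig_support Lam E (evec v)"
      and "\<exists>k::int. l * tau - l' * tau = 2 * pi * of_int k" by blast
    then have "z l = z l'" using C6 by blast
    then show "eta = gam" using C2[OF l] C3[OF l'] by simp
  qed
qed

end
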